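(* For every natural number $m>2$, $\mathrm{Log}_{=1}(\mathbb{R}^m)\not\subseteq\mathrm{Log}_{=1}(\mathbb{R}^2)$.
   Context: Modal formulas are built from a countable set of propositional variables using $\bot$, $\to$ and one unary modality $\lozenge$. A frame is a pair $(X,R)$; a valuation assigns subsets of $X$ to variables; $x\models\lozenge\varphi$ iff there is $y$ with $xRy$ and $y\models\varphi$. A formula is valid in a frame if true at every point under every valuation. For a metric space $(X,d)$, $\mathrm{Log}_{=1}(X)$ is the set of modal formulas valid in the frame $(X,R_{=1})$, where $xR_{=1}y$ iff $d(x,y)=1$. $\mathbb{R}^n$ carries the Euclidean metric. *)

theory Defs
  imports "HOL-Analysis.Analysis"
begin

datatype fm = Var nat | Bot | Imp fm fm | Dia fm

fun sat :: "'a set \<Rightarrow> ('a \<Rightarrow> 'a \<Rightarrow> bool) \<Rightarrow> (nat \<Rightarrow> 'a set) \<Rightarrow> 'a \<Rightarrow> fm \<Rightarrow> bool" where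
  "sat X R V x (Var p) = (x \<in> V p)"
| "sat X R V x Bot = False"
| "sat X R V x (Imp a b) = (sat X R V x a \<longrightarrow> sat X R V x b)"
| "sat X R V x (Dia a) = (\<exists>y\<in>X. R x y \<and> sat X R V y a)"

definition valid_frame :: "'a set \<Rightarrow> ('a \<Rightarrow> 'a \<Rightarrow> bool) \<Rightarrow> fm \<Rightarrow> bool" where
  "valid_frame X R \<phi> = (\<forall>V. (\<forall>p. V p \<subseteq> X) \<longrightarrow> (\<forall>x\<in>X. sat X R V x \<phi>))"

definition Log_eq1 :: "'a::metric_space set \<Rightarrow> fm set" where
  "Log_eq1 X = {\<phi>. valid_frame X (\<lambda>x y. dist x y = 1) \<phi>}"

end

theory Submission
  imports Defs
begin

definition sq3 :: real where "sq3 = sqrt 3 / 2"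
lemma sq3_sq: "sq3 * sq3 = 3/4" unfolding sq3_def by (simp add: field_simps)

definition Hh :: "real \<times> real \<Rightarrow> bool" where "Hh u = (snd u > 0 \<or> (snd u = 0 \<and> fst u > 0))"
definition Rf :: "real \<times> real \<Rightarrow> real \<times> real" where
  "Rf u = (fst u / 2 - sq3 * snd u, sq3 * fst u + snd u / 2)"
definition Ri :: "real \<times> real \<Rightarrow> real \<times> real" where
  "Ri u = (fst u / 2 + sq3 * snd u, snd u / 2 - sq3 * fst u)"
definition col :: "real \<times> real \<Rightarrow> bool" where
  "col u = (Hh u \<noteq> (Hh (Ri u) \<noteq> Hh (Ri (Ri u))))"

lemma sq3_h: "sq3*(sq3*t) = 3/4*t" using sq3_sq by (metis mult.assoc)
lemma Ri_Rf: "Ri (Rf u) = u"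
proof -
  obtain a b where u: "u = (a,b)" by force
  have "sq3*(sq3*a) = 3/4*a" "sq3*(sq3*b) = 3/4*b" by (rule sq3_h)+
  show ?thesis unfolding u Ri_def Rf_def by (simp add: prod_eq_iff algebra_simps) (simp add: sq3_h field_simps)
qed

lemma Rf_neg: "Rf u = - Ri (Ri u)"
proof -
  obtain a b where u: "u = (a,b)" by force
  have "sq3*(sq3*a) = 3/4*a" "sq3*(sq3*b) = 3/4*b" by (rule sq3_h)+
  show ?thesis unfolding u Ri_def Rf_def by (simp add: prod_eq_iff algebra_simps) (simp add: sq3_h field_simps)
qed

lemma Hh_neg: "u \<noteq> 0 \<Longrightarrow> Hh (- u) = (\<not> Hh u)"
  unfolding Hh_def by (cases u) (auto simp: zero_prod_def)

lemma Rf_Ri: "Rf (Ri u) = u"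
proof -
  obtain a b where u: "u = (a,b)" by force
  show ?thesis unfolding u Ri_def Rf_def by (simp add: prod_eq_iff algebra_simps) (simp add: sq3_h field_simps)
qed
lemma Ri_nz: "u \<noteq> 0 \<Longrightarrow> Ri u \<noteq> 0"
  by (metis Rf_Ri Rf_def fst_zero snd_zero mult_zero_right diff_zero add_0 div_0 zero_prod_def)

lemma col_Rf: "u \<noteq> 0 \<Longrightarrow> col (Rf u) \<noteq> col u"
  unfolding col_def Ri_Rf using Rf_neg[of u] Hh_neg[of "Ri (Ri u)"] Ri_nz by auto

lemma key:
  fixes x1 x2 y1 y2 :: real
  assumes "x1^2 + x2^2 = 1" "y1^2 + y2^2 = 1" "(x1-y1)^2 + (x2-y2)^2 = 1"
  shows "(y1,y2) = Rf (x1,x2) \<or> (x1,x2) = Rf (y1,y2)"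
proof -
  define a where "a = x1*y1 + x2*y2"
  define b where "b = x1*y2 - x2*y1"
  have a: "a = 1/2" using assms unfolding a_def by (simp add: power2_eq_square algebra_simps)
  have "a^2 + b^2 = (x1^2+x2^2)*(y1^2+y2^2)" unfolding a_def b_def
    by (simp add: power2_eq_square algebra_simps)
  hence ab: "a^2 + b^2 = 1" using assms by simp
  have "b^2 = sq3^2" using ab a sq3_sq by (simp add: power2_eq_square)
  hence b: "b = sq3 \<or> b = - sq3" by (simp add: power2_eq_iff)
  have "a*x1 - b*x2 = y1*(x1^2+x2^2)" "b*x1 + a*x2 = y2*(x1^2+x2^2)"
    "a*y1 + b*y2 = x1*(y1^2+y2^2)" "a*y2 - b*y1 = x2*(y1^2+y2^2)"
    unfolding a_def b_def by (simp_all add: power2_eq_square algebra_simps)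
  hence y1: "y1 = a*x1 - b*x2" and y2: "y2 = b*x1 + a*x2" and x1: "x1 = a*y1 + b*y2" and x2: "x2 = a*y2 - b*y1"
    using assms(1,2) by simp_all
  from b show ?thesis
  proof
    assume "b = sq3" thus ?thesis using y1 y2 a unfolding Rf_def by auto
  next
    assume "b = - sq3" thus ?thesis using x1 x2 a unfolding Rf_def by auto
  qed
qed
lemma ax2: fixes l l' :: "'m::finite" assumes "l \<noteq> l'"
  shows "norm (axis l (1::real) + axis l' 1) = sqrt 2" "norm (axis l (1::real) - axis l' 1) = sqrt 2"
  using assms by (simp_all add: norm_eq_sqrt_inner inner_add_left inner_add_right inner_diff_left inner_diff_right inner_axis_axis)

lemma tri: fixes x :: "real^'m" assumes "CARD('m) > 2"
  shows "\<exists>a b c. dist x a = 1 \<and> dist x b = 1 \<and> dist x c = 1 \<and> dist a b = 1 \<and> dist a c = 1 \<and> dist b c = 1"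
proof -
  obtain S :: "'m set" where "card S = 3" using ex_card[of 3 "UNIV::'m set"] assms by auto
  then obtain i j k :: 'm where ijk: "i \<noteq> j" "j \<noteq> k" "i \<noteq> k" unfolding card_3_iff by blast
  define t :: real where "t = 1 / sqrt 2"
  have tt: "t * sqrt 2 = 1" unfolding t_def by simp
  have t0: "t \<ge> 0" unfolding t_def by simp
  define a where "a = x + t *\<^sub>R (axis i 1 + axis j 1)"
  define b where "b = x + t *\<^sub>R (axis i 1 + axis k 1)"
  define c where "c = x + t *\<^sub>R (axis j 1 + axis k 1)"
  have "dist x a = t * norm (axis i (1::real) + axis j 1)" unfolding a_def dist_norm using t0 by simp
  moreover have "dist x b = t * norm (axis i (1::real) + axis k 1)" unfolding b_def dist_norm using t0 by simp
  moreover have "dist x c = t * norm (axis j (1::real) + axis k 1)" unfolding c_def dist_norm using t0 by simp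
  moreover have "dist a b = t * norm (axis j (1::real) - axis k 1)" unfolding a_def b_def dist_norm using t0
    by (simp add: algebra_simps flip: scaleR_diff_right)
  moreover have "dist a c = t * norm (axis i (1::real) - axis k 1)" unfolding a_def c_def dist_norm using t0
    by (simp add: algebra_simps flip: scaleR_diff_right)
  moreover have "dist b c = t * norm (axis i (1::real) - axis j 1)" unfolding b_def c_def dist_norm using t0
    by (simp add: algebra_simps flip: scaleR_diff_right)
  ultimately show ?thesis using ax2 ijk tt by metis
qed
definition Neg :: "fm \<Rightarrow> fm" where "Neg a = Imp a Bot"
definition Or :: "fm \<Rightarrow> fm \<Rightarrow> fm" where "Or a b = Imp (Neg a) b"
definition And :: "fm \<Rightarrow> fm \<Rightarrow> fm" where "And a b = Neg (Imp a (Neg b))"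
definition Box :: "fm \<Rightarrow> fm" where "Box a = Neg (Dia (Neg a))"

definition phi :: fm where
  "phi = Imp (Box (Var 1)) (Or (Dia (And (Var 0) (Dia (And (Var 1) (Var 0)))))
                               (Dia (And (Neg (Var 0)) (Dia (And (Var 1) (Neg (Var 0)))))))"

lemma sat_phi: "sat UNIV R V x phi =
  ((\<forall>y. R x y \<longrightarrow> y \<in> V 1) \<longrightarrow>
     (\<exists>y. R x y \<and> y \<in> V 0 \<and> (\<exists>z. R y z \<and> z \<in> V 1 \<and> z \<in> V 0)) \<or>
     (\<exists>y. R x y \<and> y \<notin> V 0 \<and> (\<exists>z. R y z \<and> z \<in> V 1 \<and> z \<notin> V 0)))"
  unfolding phi_def Neg_def Or_def And_def Box_def by auto

lemma phi_Rm: assumes "CARD('m) > 2" shows "phi \<in> Log_eq1 (UNIV :: (real ^ 'm) set)"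
  unfolding Log_eq1_def valid_frame_def
proof (intro CollectI allI impI ballI)
  fix V :: "nat \<Rightarrow> (real^'m) set" and x :: "real^'m"
  obtain a b c where abc: "dist x a = 1" "dist x b = 1" "dist x c = 1" "dist a b = 1" "dist a c = 1" "dist b c = 1"
    using tri[OF assms] by blast
  show "sat UNIV (\<lambda>x y. dist x y = 1) V x phi"
    unfolding sat_phi
  proof
    assume q: "\<forall>y. dist x y = 1 \<longrightarrow> y \<in> V 1"
    hence "a \<in> V 1" "b \<in> V 1" "c \<in> V 1" using abc by auto
    then show "(\<exists>y. dist x y = 1 \<and> y \<in> V 0 \<and> (\<exists>z. dist y z = 1 \<and> z \<in> V 1 \<and> z \<in> V 0)) \<or>
     (\<exists>y. dist x y = 1 \<and> y \<notin> V 0 \<and> (\<exists>z. dist y z = 1 \<and> z \<in> V 1 \<and> z \<notin> V 0))"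
      using abc by (cases "a \<in> V 0"; cases "b \<in> V 0"; cases "c \<in> V 0") blast+
  qed
qed

definition pr2 :: "real^2 \<Rightarrow> real \<times> real" where "pr2 v = (v$1, v$2)"

lemma col_diff:
  fixes v w :: "real^2"
  assumes "norm v = 1" "norm w = 1" "dist v w = 1"
  shows "col (pr2 v) \<noteq> col (pr2 w)"
proof -
  have n2: "(norm (u::real^2))^2 = (u$1)^2 + (u$2)^2" for u
    by (simp add: norm_vec_def L2_set_def sum_2)
  have h1: "(v$1)^2 + (v$2)^2 = 1" using n2[of v] assms by simp
  have h2: "(w$1)^2 + (w$2)^2 = 1" using n2[of w] assms by simp
  have h3: "(v$1 - w$1)^2 + (v$2 - w$2)^2 = 1" using n2[of "v - w"] assms by (simp add: dist_norm)
  have nz: "pr2 u \<noteq> 0" if "(u$1)^2 + (u$2)^2 = 1" for u :: "real^2"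
    using that by (auto simp: pr2_def zero_prod_def)
  from key[OF h1 h2 h3] show ?thesis
  proof
    assume "(w$1, w$2) = Rf (v$1, v$2)"
    thus ?thesis using col_Rf[OF nz[OF h1]] unfolding pr2_def by simp
  next
    assume "(v$1, v$2) = Rf (w$1, w$2)"
    thus ?thesis using col_Rf[OF nz[OF h2]] unfolding pr2_def by simp
  qed
qed

lemma phi_R2: "phi \<notin> Log_eq1 (UNIV :: (real ^ 2) set)"
proof
  assume "phi \<in> Log_eq1 (UNIV :: (real ^ 2) set)"
  hence "sat UNIV (\<lambda>x y. dist x y = 1) V 0 phi" for V :: "nat \<Rightarrow> (real^2) set"
    unfolding Log_eq1_def valid_frame_def by blast
  from this[of "\<lambda>n. if n = 0 then {v. col (pr2 v)} else {v. norm v = 1}"]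
  show False unfolding sat_phi using col_diff by (auto simp: dist_norm)
qed

theorem proposition3p12:
  assumes "CARD('m) > 2"
  shows "\<not> (Log_eq1 (UNIV :: (real ^ 'm) set) \<subseteq> Log_eq1 (UNIV :: (real ^ 2) set))"
  using phi_Rm[OF assms] phi_R2 by blast

end
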